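(* For every $k\ge 3$ there exists a root $\lambda\in\mathbb{C}$ of the matching polynomial $\varphi(\mathrm{COMB}_k)$ such that $\lambda^k\notin\mathbb{R}$.
   Context: The $k$-comb $\mathrm{COMB}_k$ is the $k$-uniform hypergraph with vertex set $[k^2]$ and edge set consisting of the edge $[k]=\{1,\dots,k\}$ together with the $k$ edges $\{i+tk: 0\le t\le k-1\}$ for $i\in[k]$. A $t$-matching of a $k$-uniform hypergraph $H$ is a set of $t$ pairwise disjoint edges. The matching polynomial is $\varphi(H)=\sum_{i=0}^{m}(-1)^i|\mathcal{M}_i|\,x^{(m-i)k}$, where $\mathcal{M}_i$ is the set of $i$-matchings of $H$ and $m$ is the maximum size of a matching in $H$. (The paper phrases the conclusion as $\lambda\notin\mathbb{R}[\zeta_k]$, meaning $\lambda$ is not a $k$-th root of a real number.) *)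

theory Defs
  imports "HOL-Computational_Algebra.Polynomial" Complex_Main
begin

text \<open>A hypergraph is given by its edge set (a set of vertex sets).
  The k-comb: vertex set [k^2], edges [k] and the "teeth" {i + t k : 0 <= t <= k-1}, i in [k].\<close>

definition comb_vertices :: "nat \<Rightarrow> nat set" where
  "comb_vertices k = {1..k^2}"

definition comb_edges :: "nat \<Rightarrow> nat set set" where
  "comb_edges k = insert {1..k} ((\<lambda>i. {i + t * k | t. t \<le> k - 1}) ` {1..k})"

definition matchings :: "'a set set \<Rightarrow> nat \<Rightarrow> 'a set set set" where
  "matchings E i = {M. M \<subseteq> E \<and> pairwise disjnt M \<and> card M = i}"

definition matching_number :: "'a set set \<Rightarrow> nat" where
  "matching_number E = Max {card M | M. M \<subseteq> E \<and> pairwise disjnt M}"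

definition matching_poly :: "nat \<Rightarrow> 'a set set \<Rightarrow> complex poly" where
  "matching_poly k E = (let m = matching_number E in
     (\<Sum>i = 0..m. monom ((-1) ^ i * of_nat (card (matchings E i))) ((m - i) * k)))"

end

theory Submission
  imports Defs "HOL-Computational_Algebra.Computational_Algebra"
begin


lemma aeq_lem: "1 + of_nat (m+2) * (a::complex) = 0 \<Longrightarrow> a = of_real (-1 / real (m+2))"
proof -
  assume h: "1 + of_nat (m+2) * (a::complex) = 0"
  have e1: "of_nat (m+2) * a = -1" using h by (simp add: eq_neg_iff_add_eq_0 add.commute)
  have e2: "of_nat (m+2) * (of_real (-1 / real (m+2)) :: complex) = -1"
  proof -
    have "real (m+2) * (-1 / real (m+2)) = -1" by (simp del: of_nat_add)
    hence "(of_real (real (m+2) * (-1 / real (m+2))) :: complex) = -1" by simp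
    thus ?thesis by (simp only: of_real_mult of_real_of_nat_eq)
  qed
  have cne: "(of_nat (m+2) :: complex) \<noteq> 0" by (simp only: of_nat_eq_0_iff)
  show ?thesis using e1 e2 cne by (metis mult_left_cancel)
qed

lemma real_root_cases:
  fixes x :: real assumes "x * (1+x)^n = 1" shows "x > 0 \<or> x < -1"
proof (rule ccontr)
  assume "\<not> ?thesis"
  hence "x \<le> 0" "-1 \<le> x" by auto
  hence "x * (1+x)^n \<le> 0" by (simp add: mult_nonpos_nonneg)
  with assms show False by simp
qed

lemma pos_unique:
  fixes x y :: real assumes "x * (1+x)^n = 1" "y * (1+y)^n = 1" "x > 0" "y > 0"
  shows "x = y"
proof (rule ccontr)
  assume ne: "x \<noteq> y"
  have *: "a * (1+a)^n < b * (1+b)^n" if "0 < a" "a < b" for a b :: real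
    using that by (intro mult_less_le_imp_less power_mono) auto
  show False using ne *[of x y] *[of y x] assms by (cases "x < y") auto
qed

lemma neg_unique:
  fixes x y :: real assumes "x * (1+x)^n = 1" "y * (1+y)^n = 1" "x < -1" "y < -1"
  shows "x = y"
proof (rule ccontr)
  assume ne: "x \<noteq> y"
  have *: "\<bar>b\<bar> * \<bar>1+b\<bar>^n < \<bar>a\<bar> * \<bar>1+a\<bar>^n" if "a < b" "b < -1" for a b :: real
    using that by (intro mult_less_le_imp_less power_mono) auto
  have ax: "\<bar>x\<bar> * \<bar>1+x\<bar>^n = 1" using arg_cong[OF assms(1), of abs] by (simp add: abs_mult power_abs)
  have ay: "\<bar>y\<bar> * \<bar>1+y\<bar>^n = 1" using arg_cong[OF assms(2), of abs] by (simp add: abs_mult power_abs)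
  show False using ne *[of x y] *[of y x] assms ax ay by (cases "x < y") auto
qed

lemma nonreal_root:
  fixes k :: nat assumes k: "k \<ge> 3"
  shows "\<exists>v::complex. v * (1+v)^(k-1) = 1 \<and> v \<notin> \<real>"
proof -
  define h :: "complex poly" where "h = [:0,1:] * [:1,1:]^(k-1) + [:-1:]"
  have ph: "poly h v = v * (1+v)^(k-1) - 1" for v by (simp add: h_def algebra_simps)
  have dg1: "degree ([:0,1:] * [:1,1:]^(k-1) :: complex poly) = k"
    using k by (subst degree_mult_eq) (auto simp: degree_power_eq)
  have dh: "degree h = k" unfolding h_def using dg1 k
    by (subst degree_add_eq_left) auto
  have h0: "h \<noteq> 0" using dh k by auto
  have sqf: "rsquarefree h"
    unfolding rsquarefree_roots
  proof (intro allI notI, elim conjE)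
    fix a assume ha: "poly h a = 0" and hd: "poly (pderiv h) a = 0"
    obtain m where m: "k = m + 2" using k by (metis add.commute le_add_diff_inverse2 le_trans nat_le_linear numeral_le_iff semiring_norm(70) Suc_1 le_Suc_eq eval_nat_numeral(3))
    have pd: "poly (pderiv h) a = (1+a)^m * (1 + of_nat (m+2) * a)"
    proof -
      have "pderiv h = [:1,1:]^(m+1) + [:0,1:] * smult (of_nat (m+1)) ([:1,1:]^m)"
        unfolding h_def m by (simp add: pderiv_add pderiv_mult pderiv_power_Suc pderiv_pCons del: power_Suc)
      thus ?thesis by (simp add: algebra_simps)
    qed
    have ha': "a * (1+a)^(m+1) = 1" using ha ph[of a] m by simp
    from hd pd have "1 + a = 0 \<or> 1 + of_nat (m+2) * a = 0" by (metis mult_eq_0_iff power_eq_0_iff)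
    thus False
    proof
      assume "1 + a = 0" thus False using ha' by simp
    next
      assume a2: "1 + of_nat (m+2) * a = 0"
      define r where "r = -1 / real (m+2)"
      have aeq: "a = of_real r" unfolding r_def using a2 by (rule aeq_lem)
      have "r * (1+r)^(m+1) < 0" unfolding r_def
        by (intro mult_neg_pos zero_less_power) (auto simp: field_simps)
      moreover have "of_real (r * (1+r)^(m+1)) = (of_real 1::complex)" using ha' aeq by simp
      hence "r * (1+r)^(m+1) = 1" by (simp only: of_real_eq_iff)
      ultimately show False by simp
    qed
  qed
  define S where "S = {z. poly h z = 0}"
  have finS: "finite S" unfolding S_def using h0 by (rule poly_roots_finite)
  have "degree (smult (lead_coeff h) (\<Prod>z\<in>S. [:-z, 1:])) = degree h"
    using complex_poly_decompose_rsquarefree[OF sqf] unfolding S_def by simp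
  moreover have "coeff h k \<noteq> 0" using h0 dh by (metis leading_coeff_0_iff)
  ultimately have "degree (\<Prod>z\<in>S. [:-z, 1:]) = k" using dh by simp
  hence cS: "card S = k" by (subst (asm) degree_prod_sum_eq) auto
  show ?thesis
  proof (rule ccontr)
    assume "\<not> ?thesis"
    hence allr: "\<And>v. v \<in> S \<Longrightarrow> v \<in> \<real>" unfolding S_def ph by auto
    have rr: "Re v * (1 + Re v)^(k-1) = 1" "v = of_real (Re v)" if "v \<in> S" for v
    proof -
      from allr[OF that] obtain x where x: "v = of_real x" by (auto elim: Reals_cases)
      have "of_real (x * (1+x)^(k-1)) = (of_real 1 :: complex)" using that x unfolding S_def ph by simp
      hence "x * (1+x)^(k-1) = 1" by (simp only: of_real_eq_iff)
      thus "Re v * (1 + Re v)^(k-1) = 1" "v = of_real (Re v)" using x by auto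
    qed
    define A where "A = {v\<in>S. Re v > 0}"
    define B where "B = {v\<in>S. Re v < -1}"
    have "S \<subseteq> A \<union> B" unfolding A_def B_def using rr real_root_cases by blast
    moreover have "card A \<le> 1"
    proof -
      have "x = y" if "x \<in> A" "y \<in> A" for x y
        using that rr[of x] rr[of y] pos_unique[of "Re x" "k-1" "Re y"] unfolding A_def by auto
      hence "card A \<le> Suc 0" using finS unfolding A_def by (subst card_le_Suc0_iff_eq) auto
      thus ?thesis by simp
    qed
    moreover have "card B \<le> 1"
    proof -
      have "x = y" if "x \<in> B" "y \<in> B" for x y
        using that rr[of x] rr[of y] neg_unique[of "Re x" "k-1" "Re y"] unfolding B_def by auto
      hence "card B \<le> Suc 0" using finS unfolding B_def by (subst card_le_Suc0_iff_eq) auto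
      thus ?thesis by simp
    qed
    moreover have "finite A" "finite B" using finS unfolding A_def B_def by auto
    ultimately have "card S \<le> 2"
      using card_mono[of "A \<union> B" S] card_Un_le[of A B] by simp
    with cS k show False by simp
  qed
qed


lemma tooth_eq_aux:
  fixes i j t s k :: nat
  assumes "i + t*k = j + s*k" "1 \<le> i" "i \<le> k" "1 \<le> j" "j \<le> k" "t \<le> s"
  shows "i = j"
proof -
  obtain d where d: "s = t + d" using assms(6) le_Suc_ex by blast
  have "i = j + d*k" using assms(1) unfolding d by (simp add: algebra_simps)
  moreover have "d = 0"
  proof (rule ccontr)
    assume "d \<noteq> 0" hence "d*k \<ge> k" by simp
    thus False using \<open>i = j + d*k\<close> assms by linarith
  qed
  ultimately show ?thesis by simp
qed

lemma tooth_eq: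
  fixes i j t s k :: nat
  assumes "i + t*k = j + s*k" "1 \<le> i" "i \<le> k" "1 \<le> j" "j \<le> k"
  shows "i = j"
  using tooth_eq_aux[OF assms] tooth_eq_aux[OF assms(1)[symmetric] assms(4,5,2,3)]
  by (cases "t \<le> s") auto

definition tooth :: "nat \<Rightarrow> nat \<Rightarrow> nat set" where
  "tooth k i = {i + t * k | t. t \<le> k - 1}"

lemma comb_edges_alt: "comb_edges k = insert {1..k} (tooth k ` {1..k})"
  unfolding comb_edges_def tooth_def by simp

lemma tooth_disj:
  assumes "i \<in> {1..k}" "j \<in> {1..k}" "i \<noteq> j"
  shows "disjnt (tooth k i) (tooth k j)"
proof -
  have "False" if xi: "x \<in> tooth k i" and xj: "x \<in> tooth k j" for x
  proof -
    obtain t where t: "x = i + t*k" using xi unfolding tooth_def by blast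
    obtain s where s: "x = j + s*k" using xj unfolding tooth_def by blast
    have "i = j" using tooth_eq[of i t k j s] t s assms(1,2) by simp
    thus False using assms(3) by simp
  qed
  thus ?thesis unfolding disjnt_def by blast
qed

lemma self_in_tooth: "i \<in> tooth k i"
  unfolding tooth_def by force

lemma inj_tooth: "inj_on (tooth k) {1..k}"
  unfolding inj_on_def
proof (intro ballI impI)
  fix i j assume ij: "i \<in> {1..k}" "j \<in> {1..k}" "tooth k i = tooth k j"
  show "i = j"
  proof (rule ccontr)
    assume "i \<noteq> j"
    with tooth_disj[OF ij(1,2)] ij(3) self_in_tooth[of i k] show False
      unfolding disjnt_def by auto
  qed
qed

lemma card_teeth: "card (tooth k ` {1..k}) = k"
  using card_image[OF inj_tooth[of k]] by simp

lemma e0_not_tooth: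
  assumes "k \<ge> 2" "i \<in> {1..k}" shows "tooth k i \<noteq> {1..k}"
proof -
  have "i + (k-1)*k \<in> tooth k i" unfolding tooth_def by auto
  moreover have "i + (k-1)*k > k"
  proof -
    have "1*k \<le> (k-1)*k" using assms by (intro mult_le_mono1) simp
    moreover have "1 \<le> i" using assms by simp
    ultimately show ?thesis using assms by linarith
  qed
  ultimately show ?thesis by auto
qed

lemma e0_meets: "i \<in> {1..k} \<Longrightarrow> \<not> disjnt {1..k} (tooth k i)"
  using self_in_tooth[of i k] unfolding disjnt_def by auto

lemma teeth_pairwise: "M \<subseteq> tooth k ` {1..k} \<Longrightarrow> pairwise disjnt M"
  unfolding pairwise_def
proof (intro ballI impI)
  fix X Y assume "M \<subseteq> tooth k ` {1..k}" "X \<in> M" "Y \<in> M" "X \<noteq> Y"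
  then obtain i j where "i \<in> {1..k}" "j \<in> {1..k}" "X = tooth k i" "Y = tooth k j" by blast
  thus "disjnt X Y" using tooth_disj \<open>X \<noteq> Y\<close> by blast
qed

lemma matchings_comb:
  assumes "k \<ge> 2"
  shows "matchings (comb_edges k) n =
    {M. M \<subseteq> tooth k ` {1..k} \<and> card M = n} \<union> (if n = 1 then {{{1..k}}} else {})"
  (is "?L = ?A \<union> ?B")
proof
  show "?L \<subseteq> ?A \<union> ?B"
  proof
    fix M assume "M \<in> ?L"
    hence M: "M \<subseteq> insert {1..k} (tooth k ` {1..k})" "pairwise disjnt M" "card M = n"
      unfolding matchings_def comb_edges_alt by auto
    show "M \<in> ?A \<union> ?B"
    proof (cases "{1..k} \<in> M")
      case True
      have "M = {{1..k}}"
      proof (rule ccontr)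
        assume "M \<noteq> {{1..k}}"
        then obtain X where X: "X \<in> M" "X \<noteq> {1..k}" using True by blast
        then obtain i where i: "i \<in> {1..k}" "X = tooth k i" using M(1) by blast
        have "disjnt {1..k} X" using M(2) True X unfolding pairwise_def by blast
        thus False using e0_meets[OF i(1)] i by simp
      qed
      thus ?thesis using M(3) by auto
    next
      case False
      thus ?thesis using M by auto
    qed
  qed
next
  show "?A \<union> ?B \<subseteq> ?L"
  proof
    fix M assume "M \<in> ?A \<union> ?B"
    thus "M \<in> ?L"
    proof
      assume "M \<in> ?A" thus ?thesis unfolding matchings_def comb_edges_alt
        using teeth_pairwise by auto
    next
      assume "M \<in> ?B" thus ?thesis unfolding matchings_def comb_edges_alt
        by (auto split: if_splits simp: pairwise_def)
    qed
  qed
qed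

lemma card_matchings_comb:
  assumes "k \<ge> 2"
  shows "card (matchings (comb_edges k) n) = (k choose n) + (if n = 1 then 1 else 0)"
proof -
  have fin: "finite {M. M \<subseteq> tooth k ` {1..k} \<and> card M = n}" by simp
  have dis: "{M. M \<subseteq> tooth k ` {1..k} \<and> card M = n} \<inter> (if n = 1 then {{{1..k}}} else {}) = {}"
  proof -
    have "{1..k} \<notin> tooth k ` {1..k}" using e0_not_tooth[OF assms] by (metis imageE)
    thus ?thesis by auto
  qed
  have "card (matchings (comb_edges k) n) =
      card {M. M \<subseteq> tooth k ` {1..k} \<and> card M = n} + card (if n = 1 then {{{1..k}}} else ({}::nat set set set))"
    unfolding matchings_comb[OF assms] by (rule card_Un_disjoint[OF fin _ dis]) simp
  also have "card {M. M \<subseteq> tooth k ` {1..k} \<and> card M = n} = k choose n"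
    using n_subsets[of "tooth k ` {1..k}" n] card_teeth[of k] by simp
  finally show ?thesis by simp
qed

lemma matching_number_comb:
  assumes "k \<ge> 2"
  shows "matching_number (comb_edges k) = k"
proof -
  let ?S = "{card M | M. M \<subseteq> comb_edges k \<and> pairwise disjnt M}"
  have le: "card M \<le> k" if "M \<subseteq> comb_edges k" "pairwise disjnt M" for M
  proof -
    have "M \<in> matchings (comb_edges k) (card M)" using that unfolding matchings_def by auto
    hence "M \<in> {M. M \<subseteq> tooth k ` {1..k} \<and> card M = card M} \<union> (if card M = 1 then {{{1..k}}} else {})"
      using matchings_comb[OF assms] by simp
    thus ?thesis
    proof
      assume "M \<in> {M. M \<subseteq> tooth k ` {1..k} \<and> card M = card M}"
      thus ?thesis using card_mono[of "tooth k ` {1..k}" M] card_teeth[of k] by auto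
    next
      assume "M \<in> (if card M = 1 then {{{1..k}}} else {})"
      thus ?thesis using assms by (auto split: if_splits)
    qed
  qed
  have mem: "k \<in> ?S"
  proof -
    have "tooth k ` {1..k} \<subseteq> comb_edges k" unfolding comb_edges_alt by auto
    moreover have "pairwise disjnt (tooth k ` {1..k})" using teeth_pairwise by blast
    ultimately show ?thesis using card_teeth[of k] by (metis (mono_tags, lifting) mem_Collect_eq)
  qed
  have "?S \<subseteq> {0..k}" using le by auto
  hence fS: "finite ?S" by (rule finite_subset) simp
  have leS: "y \<le> k" if "y \<in> ?S" for y using that le by blast
  show ?thesis unfolding matching_number_def by (rule Max_eqI[OF fS leS mem])
qed


lemma poly_val:
  assumes "k \<ge> 2"
  shows "poly (matching_poly k (comb_edges k)) z = (z^k - 1)^k - (z^k)^(k-1)"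
proof -
  define y where "y = z^k"
  have pw: "z^((k-i)*k) = y^(k-i)" for i unfolding y_def by (simp add: power_mult[symmetric] mult.commute)
  have "poly (matching_poly k (comb_edges k)) z =
    (\<Sum>i=0..k. (-1)^i * of_nat ((k choose i) + (if i = 1 then 1 else 0)) * y^(k-i))"
    unfolding matching_poly_def Let_def matching_number_comb[OF assms] poly_sum poly_monom
      card_matchings_comb[OF assms] pw ..
  also have "\<dots> = (\<Sum>i=0..k. of_nat (k choose i) * (-1)^i * y^(k-i)) +
                   (\<Sum>i=0..k. (if i = 1 then (-1)^i * y^(k-i) else 0))"
    by (subst sum.distrib[symmetric]) (rule sum.cong, auto simp: algebra_simps)
  also have "(\<Sum>i=0..k. of_nat (k choose i) * (-1)^i * y^(k-i)) = (-1 + y)^k"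
    by (subst binomial_ring) (simp add: atLeast0AtMost)
  also have "(\<Sum>i=0..k. (if i = 1 then (-1)^i * y^(k-i) else 0)) = -(y^(k-1))"
    using assms by (subst sum.delta) auto
  finally show ?thesis unfolding y_def by simp
qed

theorem mainTheorem6:
  fixes k :: nat
  assumes "k \<ge> 3"
  shows "\<exists>z::complex. poly (matching_poly k (comb_edges k)) z = 0 \<and> z ^ k \<notin> \<real>"
proof -
  obtain v :: complex where v: "v * (1+v)^(k-1) = 1" "v \<notin> \<real>" using nonreal_root[OF assms] by blast
  have v0: "v \<noteq> 0" using v(1) by auto
  define y where "y = 1 + 1/v"
  have yR: "y \<notin> \<real>"
  proof
    assume "y \<in> \<real>"
    hence "1 / (y - 1) \<in> \<real>" by (intro Reals_divide Reals_diff Reals_1)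
    moreover have "1 / (y - 1) = v" unfolding y_def by simp
    ultimately show False using v(2) by simp
  qed
  hence y0: "y \<noteq> 0" by auto
  have kpos: "k > 0" using assms by simp
  obtain z where z: "z^k = y"
    using bij_betw_apply[OF bij_betw_nth_root_unity[OF y0 kpos], of 1] by auto
  obtain n where n: "k = Suc n" using kpos gr0_conv_Suc by blast
  have "(y - 1)^k - y^(k-1) = (1 - v * (1+v)^(k-1)) / v^k"
    unfolding y_def n using v0 by (simp add: field_simps power_divide)
  also have "\<dots> = 0" using v(1) by simp
  finally have "(y - 1)^k - y^(k-1) = 0" .
  hence "poly (matching_poly k (comb_edges k)) z = 0"
    using poly_val[of k z] assms z by simp
  thus ?thesis using z yR by blast
qed

end
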